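(* Let $k,N\in\mathbb{N}$ and let $a_1,a_2,\dots$ be complex numbers; set $a_0:=1$. Define $a_{n,j}:=a_j$ if $n\le N$ and $a_{n,j}:=0$ otherwise ($n,j\ge 1$). Then $$\hat{B}_{k+N,N}(a_0,a_1,\dots,a_k)=\sum_{L\vdash k}\frac{1}{C_{stb}(L)}\sum_{\sigma\in S_{\ell(L)}}\operatorname{sign}(\sigma)\,\mathbb{A}_{\sigma,L}\big(\{a_{n,j}\}_{n,j\ge1}\big).$$
   Context: The ordinary Bell polynomial is $\hat{B}_{n,k}(x_1,\dots,x_{n-k+1}):=\sum\frac{k!}{j_1!\cdots j_{n-k+1}!}x_1^{j_1}\cdots x_{n-k+1}^{j_{n-k+1}}$, summed over integers $j_i\ge0$ with $\sum_i j_i=k$ and $\sum_i i\,j_i=n$; equivalently $\big(\sum_{j\ge1}x_jt^j\big)^k=\sum_{n\ge k}\hat{B}_{n,k}(x_1,\dots,x_{n-k+1})t^n$ (here the arguments are $x_1=a_0,x_2=a_1,\dots$). $L\vdash k$ means $L=[x_1,\dots,x_m]$ is a partition of $k$ (multiset of positive integers summing to $k$), $\ell(L)=m$, and $C_{stb}(L):=\prod_x(\#\{i:x_i=x\})!$ over distinct values $x$ in $L$. Writing $L=[k_1,\dots,k_m]$ with $k_1\le\cdots\le k_m$ and, for $\sigma\in S_m$, decomposing $\sigma$ into disjoint cycles $C_1,\dots,C_r$ (fixed points kept as length-one cycles), $\mathbb{A}_{\sigma,L}(\{a_{n,j}\}):=\prod_{t=1}^{r}\big(\sum_{n=1}^{\infty}\prod_{i\in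 C_t}a_{n,k_i}\big)$ (finite sums here). *)

theory Defs
  imports Complex_Main "HOL-Combinatorics.Combinatorics" "HOL-Library.FuncSet"
begin

text \<open>Exponent vectors are extensional functions on {1..n-k+1}; each j_i is at most k.\<close>
definition ord_bell :: "nat \<Rightarrow> nat \<Rightarrow> (nat \<Rightarrow> complex) \<Rightarrow> complex" where
  "ord_bell n k x =
     (\<Sum>j \<in> {j \<in> {1..n-k+1} \<rightarrow>\<^sub>E {0..k}.
              (\<Sum>i\<in>{1..n-k+1}. j i) = k \<and> (\<Sum>i\<in>{1..n-k+1}. i * j i) = n}.
        of_nat (fact k) / of_nat (\<Prod>i\<in>{1..n-k+1}. fact (j i))
        * (\<Prod>i\<in>{1..n-k+1}. x i ^ j i))"

definition partitions_of :: "nat \<Rightarrow> nat list set" where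
  "partitions_of k = {L. sorted L \<and> (\<forall>x\<in>set L. 0 < x) \<and> sum_list L = k}"

definition C_stb :: "nat list \<Rightarrow> nat" where
  "C_stb L = (\<Prod>x\<in>set L. fact (count_list L x))"

text \<open>Cycles of a permutation sigma of {0..<m} (fixed points give singleton cycles).\<close>
definition cycles_of :: "nat \<Rightarrow> (nat \<Rightarrow> nat) \<Rightarrow> nat set set" where
  "cycles_of m \<sigma> = (\<lambda>i. orbit \<sigma> i) ` {..<m}"

text \<open>A_{sigma,L}({a_{n,j}}) = prod over cycles C of sum_{n>=1} prod_{i in C} a_{n,k_i}
  (positions are 0-based: index i refers to L ! i).\<close>
definition A_sigma_L :: "(nat \<Rightarrow> nat) \<Rightarrow> nat list \<Rightarrow> (nat \<Rightarrow> nat \<Rightarrow> complex) \<Rightarrow> complex" where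
  "A_sigma_L \<sigma> L a =
     (\<Prod>C\<in>cycles_of (length L) \<sigma>. (\<Sum>n. \<Prod>i\<in>C. a (Suc n) (L ! i)))"

end

theory Submission
  imports Defs
begin

lemma orbit_same:
  assumes "permutation f" "y \<in> orbit f x" shows "orbit f y = orbit f x"
  using assms cyclic_on_orbit' orbit_cyclic_eq3 by metis

lemma cyc_props:
  assumes "\<sigma> permutes {..<m}" "C \<in> cycles_of m \<sigma>"
  shows "finite C" "C \<noteq> {}" "C \<subseteq> {..<m}"
proof -
  obtain i where i: "i < m" "C = orbit \<sigma> i" using assms(2) by (auto simp: cycles_of_def)
  show "C \<subseteq> {..<m}" using permutes_orbit_subset[OF assms(1)] i by auto
  then show "finite C" using finite_subset by blast
  show "C \<noteq> {}" using i orbit_nonempty by metis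
qed

lemma cyc_disj:
  assumes "\<sigma> permutes {..<m}" "C \<in> cycles_of m \<sigma>" "D \<in> cycles_of m \<sigma>" "C \<noteq> D"
  shows "C \<inter> D = {}"
proof (rule ccontr)
  have p: "permutation \<sigma>" using assms(1) permutation_permutes by blast
  assume "C \<inter> D \<noteq> {}"
  then obtain z where z: "z \<in> C" "z \<in> D" by blast
  obtain i where i: "C = orbit \<sigma> i" using assms(2) by (auto simp: cycles_of_def)
  obtain j where j: "D = orbit \<sigma> j" using assms(3) by (auto simp: cycles_of_def)
  have "C = orbit \<sigma> z" using orbit_same[OF p] z i by metis
  moreover have "D = orbit \<sigma> z" using orbit_same[OF p] z j by metis
  ultimately show False using assms(4) by simp
qed

lemma cyc_union:
  assumes "\<sigma> permutes {..<m}"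
  shows "\<Union>(cycles_of m \<sigma>) = {..<m}"
proof
  show "\<Union>(cycles_of m \<sigma>) \<subseteq> {..<m}" using cyc_props(3)[OF assms] by blast
  have p: "permutation \<sigma>" using assms(1) permutation_permutes by blast
  show "{..<m} \<subseteq> \<Union>(cycles_of m \<sigma>)"
    using permutation_self_in_orbit[OF p] by (auto simp: cycles_of_def)
qed

lemma inner_sum:
  assumes "finite C" "C \<noteq> {}"
  shows "(\<Sum>n. \<Prod>i\<in>C. (\<lambda>n j. if n \<le> N then a j else (0::complex)) (Suc n) (L ! i))
       = of_nat N * (\<Prod>i\<in>C. a (L ! i))"
proof -
  have eq: "(\<lambda>n. \<Prod>i\<in>C. (\<lambda>n j. if n \<le> N then a j else (0::complex)) (Suc n) (L ! i))
     = (\<lambda>n. if n < N then (\<Prod>i\<in>C. a (L ! i)) else 0)"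
    using assms by (intro ext) (auto simp: prod_zero_iff)
  have "(\<Sum>n. (if n < N then (\<Prod>i\<in>C. a (L ! i)) else 0)) = (\<Sum>n<N. (if n < N then (\<Prod>i\<in>C. a (L ! i)) else 0))"
    by (rule suminf_finite) auto
  then show ?thesis unfolding eq by simp
qed

lemma A_eq:
  assumes "\<sigma> permutes {..<length L}"
  shows "A_sigma_L \<sigma> L (\<lambda>n j. if n \<le> N then a j else 0)
     = of_nat N ^ card (cycles_of (length L) \<sigma>) * (\<Prod>i<length L. a (L ! i))"
proof -
  have "A_sigma_L \<sigma> L (\<lambda>n j. if n \<le> N then a j else 0)
     = (\<Prod>C\<in>cycles_of (length L) \<sigma>. of_nat N * (\<Prod>i\<in>C. a (L ! i)))"
    unfolding A_sigma_L_def
    by (rule prod.cong[OF refl], rule inner_sum) (use cyc_props[OF assms] in auto)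
  also have "\<dots> = of_nat N ^ card (cycles_of (length L) \<sigma>) * (\<Prod>C\<in>cycles_of (length L) \<sigma>. \<Prod>i\<in>C. a (L ! i))"
    by (simp add: prod.distrib)
  also have "(\<Prod>C\<in>cycles_of (length L) \<sigma>. \<Prod>i\<in>C. a (L ! i)) = (\<Prod>i\<in>\<Union>(cycles_of (length L) \<sigma>). a (L ! i))"
    using prod.Union_disjoint[of "cycles_of (length L) \<sigma>" "\<lambda>i. a (L ! i)"] cyc_props(1)[OF assms] cyc_disj[OF assms]
    by (simp add: o_def)
  also have "\<dots> = (\<Prod>i<length L. a (L ! i))" using cyc_union[OF assms] by simp
  finally show ?thesis .
qed

lemma fix_const_orbit:
  assumes "\<sigma> permutes {..<m}" "\<forall>i<m. f (\<sigma> i) = f i" "i < m" "j \<in> orbit \<sigma> i"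
  shows "f j = f i"
  using assms(4)
proof induction
  case base then show ?case using assms(2,3) by simp
next
  case (step y)
  have "y < m" using permutes_orbit_subset[OF assms(1)] assms(3) step(1) by auto
  then show ?case using assms(2) step by simp
qed

lemma card_fix:
  assumes s: "\<sigma> permutes {..<m}"
  shows "N ^ card (cycles_of m \<sigma>) = card {f \<in> {..<m} \<rightarrow>\<^sub>E {..<(N::nat)}. \<forall>i<m. f (\<sigma> i) = f i}"
proof -
  define Cy where "Cy = cycles_of m \<sigma>"
  define Fx where "Fx = {f \<in> {..<m} \<rightarrow>\<^sub>E {..<(N::nat)}. \<forall>i<m. f (\<sigma> i) = f i}"
  have p: "permutation \<sigma>" using s permutation_permutes by blast
  have finCy: "finite Cy" unfolding Cy_def cycles_of_def by simp
  have c1: "card (Cy \<rightarrow>\<^sub>E {..<N}) = N ^ card Cy"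
    using finCy by (simp add: card_PiE)
  define \<phi> where "\<phi> F = (\<lambda>i\<in>{..<m}. F (orbit \<sigma> i))" for F :: "nat set \<Rightarrow> nat"
  define \<psi> where "\<psi> f = (\<lambda>C\<in>Cy. f (SOME i. i \<in> C))" for f :: "nat \<Rightarrow> nat"
  have some_in: "(SOME i. i \<in> C) \<in> C" if "C \<in> Cy" for C
    using cyc_props(2)[OF s, of C] that unfolding Cy_def by (simp add: some_in_eq)
  have "bij_betw \<phi> (Cy \<rightarrow>\<^sub>E {..<N}) Fx"
  proof (rule bij_betwI[where g = \<psi>])
    show "\<phi> \<in> (Cy \<rightarrow>\<^sub>E {..<N}) \<rightarrow> Fx"
    proof
      fix F assume F: "F \<in> Cy \<rightarrow>\<^sub>E {..<N}"
      have "\<phi> F (\<sigma> i) = \<phi> F i" if "i < m" for i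
        using that permutes_in_image[OF s, of i] permutation_orbit_step[OF p, of i]
        by (simp add: \<phi>_def)
      moreover have "\<phi> F \<in> {..<m} \<rightarrow>\<^sub>E {..<N}"
        using F by (auto simp: \<phi>_def Cy_def cycles_of_def)
      ultimately show "\<phi> F \<in> Fx" by (simp add: Fx_def)
    qed
    show "\<psi> \<in> Fx \<rightarrow> (Cy \<rightarrow>\<^sub>E {..<N})"
    proof
      fix f assume f: "f \<in> Fx"
      show "\<psi> f \<in> Cy \<rightarrow>\<^sub>E {..<N}"
      proof
        fix C assume C: "C \<in> Cy"
        have "(SOME i. i \<in> C) < m" using some_in[OF C] cyc_props(3)[OF s, of C] C
          unfolding Cy_def by auto
        then show "\<psi> f C \<in> {..<N}" using f C by (auto simp: \<psi>_def Fx_def)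
      qed (simp add: \<psi>_def)
    qed
    show "\<psi> (\<phi> F) = F" if F: "F \<in> Cy \<rightarrow>\<^sub>E {..<N}" for F
    proof
      fix C show "\<psi> (\<phi> F) C = F C"
      proof (cases "C \<in> Cy")
        case True
        obtain i where i: "i < m" "C = orbit \<sigma> i" using True by (auto simp: Cy_def cycles_of_def)
        have sC: "(SOME i. i \<in> C) \<in> C" using some_in[OF True] .
        have "(SOME i. i \<in> C) < m" using sC cyc_props(3)[OF s, of C] True
          unfolding Cy_def by auto
        moreover have "orbit \<sigma> (SOME i. i \<in> C) = C" using orbit_same[OF p] sC i by metis
        ultimately show ?thesis using True by (simp add: \<psi>_def \<phi>_def)
      next
        case False then show ?thesis using F by (simp add: \<psi>_def PiE_def extensional_def)
      qed
    qed
    show "\<phi> (\<psi> f) = f" if f: "f \<in> Fx" for f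
    proof
      fix i show "\<phi> (\<psi> f) i = f i"
      proof (cases "i < m")
        case True
        have inC: "orbit \<sigma> i \<in> Cy" using True by (auto simp: Cy_def cycles_of_def)
        have "(SOME j. j \<in> orbit \<sigma> i) \<in> orbit \<sigma> i" using some_in[OF inC] .
        then have "f (SOME j. j \<in> orbit \<sigma> i) = f i"
          using fix_const_orbit[OF s _ True] f by (auto simp: Fx_def)
        then show ?thesis using True inC by (simp add: \<psi>_def \<phi>_def)
      next
        case False then show ?thesis using f by (simp add: \<phi>_def Fx_def PiE_def extensional_def)
      qed
    qed
  qed
  then have "card Fx = card (Cy \<rightarrow>\<^sub>E {..<N})" by (rule bij_betw_same_card[symmetric])
  then have "card Fx = N ^ card Cy" using c1 by (rule trans)
  then show ?thesis unfolding Fx_def Cy_def by (rule sym)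
qed

lemma sign_sum_fix:
  assumes f: "f \<in> {..<(m::nat)} \<rightarrow>\<^sub>E {..<(N::nat)}"
  shows "(\<Sum>\<sigma>\<in>{\<sigma>. \<sigma> permutes {..<m} \<and> (\<forall>i<m. f (\<sigma> i) = f i)}. sign \<sigma>)
       = (if inj_on f {..<m} then 1 else (0::int))"
proof (cases "inj_on f {..<m}")
  case True
  have "{\<sigma>. \<sigma> permutes {..<m} \<and> (\<forall>i<m. f (\<sigma> i) = f i)} = {id}"
  proof (intro set_eqI iffI)
    fix \<sigma> assume "\<sigma> \<in> {\<sigma>. \<sigma> permutes {..<m} \<and> (\<forall>i<m. f (\<sigma> i) = f i)}"
    then have s: "\<sigma> permutes {..<m}" and fx: "\<forall>i<m. f (\<sigma> i) = f i" by auto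
    have "\<sigma> i = i" for i
    proof (cases "i < m")
      case True
      then have "\<sigma> i < m" using permutes_in_image[OF s] by auto
      then show ?thesis using \<open>inj_on f {..<m}\<close> fx True by (auto dest: inj_onD)
    next
      case False then show ?thesis using permutes_not_in[OF s] by auto
    qed
    then show "\<sigma> \<in> {id}" by auto
  qed (auto simp: permutes_id)
  then show ?thesis using True by simp
next
  case False
  then obtain p q where pq: "p < m" "q < m" "p \<noteq> q" "f p = f q"
    by (auto simp: inj_on_def)
  define \<tau> where "\<tau> = transpose p q"
  define S where "S = {\<sigma>. \<sigma> permutes {..<m} \<and> (\<forall>i<m. f (\<sigma> i) = f i)}"
  have ft: "f (\<tau> x) = f x" for x using pq by (auto simp: \<tau>_def transpose_def)
  have tp: "\<tau> permutes {..<m}" using pq by (simp add: \<tau>_def permutes_swap_id)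
  have inS: "\<tau> \<circ> \<sigma> \<in> S" if "\<sigma> \<in> S" for \<sigma>
  proof -
    have "\<sigma> permutes {..<m}" "\<forall>i<m. f (\<sigma> i) = f i" using that by (auto simp: S_def)
    moreover have "\<tau> \<circ> \<sigma> permutes {..<m}" using permutes_compose[OF calculation(1) tp] .
    ultimately show ?thesis unfolding S_def by (simp add: ft)
  qed
  have sg: "sign (\<tau> \<circ> \<sigma>) = - sign \<sigma>" if "\<sigma> \<in> S" for \<sigma>
  proof -
    have "\<sigma> permutes {..<m}" using that by (simp add: S_def)
    then have ps: "permutation \<sigma>" by (rule permutes_imp_permutation[OF finite_lessThan])
    have "sign (\<tau> \<circ> \<sigma>) = sign \<tau> * sign \<sigma>"
      unfolding \<tau>_def by (rule sign_compose[OF permutation_swap_id ps])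
    moreover have "sign \<tau> = -1" using pq by (simp add: \<tau>_def sign_swap_id)
    ultimately show ?thesis by simp
  qed
  have inv: "\<tau> \<circ> (\<tau> \<circ> \<sigma>) = \<sigma>" for \<sigma>
    by (simp add: \<tau>_def fun_eq_iff)
  have "(\<Sum>\<sigma>\<in>S. sign \<sigma>) = (\<Sum>\<sigma>\<in>S. sign (\<tau> \<circ> \<sigma>))"
    by (rule sum.reindex_bij_witness[where i = "\<lambda>\<sigma>. \<tau> \<circ> \<sigma>" and j = "\<lambda>\<sigma>. \<tau> \<circ> \<sigma>"])
       (simp_all only: inv inS)
  also have "\<dots> = - (\<Sum>\<sigma>\<in>S. sign \<sigma>)" by (simp add: sg sum_negf)
  finally have "(\<Sum>\<sigma>\<in>S. sign \<sigma>) = (0::int)" by simp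
  then show ?thesis using False by (simp add: S_def)
qed

lemma perm_sum:
  "(\<Sum>\<sigma>\<in>{\<sigma>. \<sigma> permutes {..<m}}. sign \<sigma> * int N ^ card (cycles_of m \<sigma>))
     = int (\<Prod>i<m. N - i)"
proof -
  define P where "P = {\<sigma>. \<sigma> permutes {..<m}}"
  define F where "F = {..<m} \<rightarrow>\<^sub>E {..<(N::nat)}"
  have fP: "finite P" unfolding P_def by (simp add: finite_permutations)
  have fF: "finite F" unfolding F_def by (simp add: finite_PiE)
  have "(\<Sum>\<sigma>\<in>P. sign \<sigma> * int N ^ card (cycles_of m \<sigma>))
      = (\<Sum>\<sigma>\<in>P. \<Sum>f\<in>{f \<in> F. \<forall>i<m. f (\<sigma> i) = f i}. sign \<sigma>)"
  proof (rule sum.cong[OF refl])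
    fix \<sigma> assume "\<sigma> \<in> P"
    then have sp: "\<sigma> permutes {..<m}" unfolding P_def by simp
    have c: "N ^ card (cycles_of m \<sigma>) = card {f \<in> F. \<forall>i<m. f (\<sigma> i) = f i}"
      unfolding F_def by (rule card_fix[OF sp])
    have "sign \<sigma> * int N ^ card (cycles_of m \<sigma>) = sign \<sigma> * int (N ^ card (cycles_of m \<sigma>))"
      by (simp only: of_nat_power)
    also have "\<dots> = int (card {f \<in> F. \<forall>i<m. f (\<sigma> i) = f i}) * sign \<sigma>"
      by (simp only: c mult.commute)
    also have "\<dots> = (\<Sum>f\<in>{f \<in> F. \<forall>i<m. f (\<sigma> i) = f i}. sign \<sigma>)"
      by (simp only: sum_constant)
    finally show "sign \<sigma> * int N ^ card (cycles_of m \<sigma>) = (\<Sum>f\<in>{f \<in> F. \<forall>i<m. f (\<sigma> i) = f i}. sign \<sigma>)" .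
  qed
  also have "\<dots> = (\<Sum>f\<in>F. \<Sum>\<sigma>\<in>{\<sigma> \<in> P. \<forall>i<m. f (\<sigma> i) = f i}. sign \<sigma>)"
    by (rule sum.swap_restrict[OF fP fF])
  also have "\<dots> = (\<Sum>f\<in>F. if inj_on f {..<m} then 1 else (0::int))"
  proof (rule sum.cong[OF refl])
    fix f assume "f \<in> F"
    then have "f \<in> {..<m} \<rightarrow>\<^sub>E {..<N}" unfolding F_def .
    from sign_sum_fix[OF this]
    show "(\<Sum>\<sigma>\<in>{\<sigma> \<in> P. \<forall>i<m. f (\<sigma> i) = f i}. sign \<sigma>) = (if inj_on f {..<m} then 1 else (0::int))"
      unfolding P_def by simp
  qed
  also have "\<dots> = int (card {f \<in> F. inj_on f {..<m}})"
    using fF by (simp add: sum.If_cases Int_def conj_commute)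
  also have "card {f \<in> F. inj_on f {..<m}} = (\<Prod>i<m. N - i)"
    using card_inj_on_subset_funcset[of "{..<m}" "{..<N}" "{..<m}"]
    by (simp add: F_def atLeast0LessThan)
  finally show ?thesis by (simp add: P_def)
qed

lemma set_split1: "{1..Suc k} = insert 1 (Suc ` {1..k})"
proof -
  have "{1..Suc k} = insert 1 {Suc 1..Suc k}" by auto
  then show ?thesis by (simp only: image_Suc_atLeastAtMost)
qed

lemma split_sum1: "(\<Sum>i\<in>{1..Suc k}. f i) = f 1 + (\<Sum>v\<in>{1..k}. f (Suc v))"
proof -
  have "sum f (insert 1 (Suc ` {1..k})) = f 1 + sum f (Suc ` {1..k})"
    by (rule sum.insert) auto
  moreover have "sum f (Suc ` {1..k}) = sum (f \<circ> Suc) {1..k}"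
    by (rule sum.reindex) simp
  ultimately show ?thesis unfolding set_split1 by simp
qed

lemma split_prod1: "(\<Prod>i\<in>{1..Suc k}. f i) = f 1 * (\<Prod>v\<in>{1..k}. f (Suc v))"
proof -
  have "prod f (insert 1 (Suc ` {1..k})) = f 1 * prod f (Suc ` {1..k})"
    by (rule prod.insert) auto
  moreover have "prod f (Suc ` {1..k}) = prod (f \<circ> Suc) {1..k}"
    by (rule prod.reindex) simp
  ultimately show ?thesis unfolding set_split1 by simp
qed

lemma sum_count: "finite A \<Longrightarrow> set L \<subseteq> A \<Longrightarrow> (\<Sum>v\<in>A. count_list L v) = length L"
proof (induction L)
  case Nil then show ?case by simp
next
  case (Cons x L)
  have "(\<Sum>v\<in>A. count_list (x # L) v) = (\<Sum>v\<in>A. count_list L v + (if v = x then 1 else 0))"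
    by (rule sum.cong) auto
  also have "\<dots> = (\<Sum>v\<in>A. count_list L v) + 1"
    using Cons.prems by (simp add: sum.distrib)
  finally show ?case using Cons by simp
qed

lemma sum_count_mult: "finite A \<Longrightarrow> set L \<subseteq> A \<Longrightarrow> (\<Sum>v\<in>A. v * count_list L v) = sum_list L"
proof (induction L)
  case Nil then show ?case by simp
next
  case (Cons x L)
  have "(\<Sum>v\<in>A. v * count_list (x # L) v) = (\<Sum>v\<in>A. v * count_list L v + (if v = x then x else 0))"
    by (rule sum.cong) auto
  also have "\<dots> = (\<Sum>v\<in>A. v * count_list L v) + x"
    using Cons.prems by (simp add: sum.distrib)
  finally show ?case using Cons by simp
qed

lemma prod_count: "finite A \<Longrightarrow> set L \<subseteq> A \<Longrightarrow> (\<Prod>v\<in>A. (x v :: 'a :: comm_monoid_mult) ^ count_list L v) = prod_list (map x L)"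
proof (induction L)
  case Nil then show ?case by simp
next
  case (Cons y L)
  have "(\<Prod>v\<in>A. x v ^ count_list (y # L) v) = (\<Prod>v\<in>A. x v ^ count_list L v * (if v = y then x y else 1))"
    by (rule prod.cong) (auto simp: mult.commute)
  also have "\<dots> = (\<Prod>v\<in>A. x v ^ count_list L v) * x y"
    using Cons.prems by (simp add: prod.distrib)
  finally show ?case using Cons by (simp add: mult.commute)
qed

definition rep_list :: "(nat \<Rightarrow> nat) \<Rightarrow> nat \<Rightarrow> nat \<Rightarrow> nat list" where
  "rep_list g a b = concat (map (\<lambda>v. replicate (g v) v) [a..<b])"

lemma count_list_rep: "count_list (replicate n x) y = (if x = y then n else 0)"
  by (induction n) auto

lemma rep_list_count: "count_list (rep_list g a b) v = (if a \<le> v \<and> v < b then g v else 0)"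
  by (induction b) (auto simp: rep_list_def count_list_append count_list_rep)

lemma rep_list_set: "set (rep_list g a b) \<subseteq> {a..<b}"
  by (auto simp: rep_list_def)

lemma rep_list_sorted: "sorted (rep_list g a b)"
proof (induction b)
  case 0 then show ?case by (simp add: rep_list_def)
next
  case (Suc b)
  have "rep_list g a (Suc b) = (if a \<le> b then rep_list g a b @ replicate (g b) b else rep_list g a b)"
    by (simp add: rep_list_def)
  moreover have "\<forall>x\<in>set (rep_list g a b). x \<le> b" using rep_list_set[of g a b] by auto
  ultimately show ?case using Suc by (auto simp: sorted_append)
qed

lemma sorted_count_eq:
  assumes "sorted xs" "sorted (ys :: nat list)" "\<And>v. count_list xs v = count_list ys v"
  shows "xs = ys"
proof -
  have "mset xs = mset ys" by (rule multiset_eqI) (simp add: count_mset assms(3))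
  then have "sort ys = xs" using assms(1) by (rule properties_for_sort)
  then show ?thesis using assms(2) by (simp add: sorted_sort_id)
qed

lemma length_le_sum: "(\<forall>x\<in>set L. 0 < (x::nat)) \<Longrightarrow> length L \<le> sum_list L"
  by (induction L) auto

lemma finite_partitions: "finite (partitions_of k)"
proof -
  have "partitions_of k \<subseteq> {xs. set xs \<subseteq> {..k} \<and> length xs \<le> k}"
    using length_le_sum member_le_sum_list by (fastforce simp: partitions_of_def)
  then show ?thesis by (rule finite_subset) (simp add: finite_lists_length_le)
qed

lemma ff_fact: "m \<le> N \<Longrightarrow> (\<Prod>i<m. N - i) * fact (N - m) = (fact N :: nat)"
proof (induction m)
  case 0 then show ?case by simp
next
  case (Suc m)
  have "fact (N - m) = (N - m) * (fact (N - Suc m) :: nat)"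
  proof -
    have "N - m = Suc (N - Suc m)" using Suc.prems by simp
    then show ?thesis by (simp only: fact_Suc of_nat_id)
  qed
  then show ?case using Suc by (simp add: mult.assoc)
qed

lemma ff_zero: "N < m \<Longrightarrow> (\<Prod>i<m. N - i) = (0::nat)"
  by (rule prod_zero) auto

definition toJ :: "nat \<Rightarrow> nat \<Rightarrow> nat list \<Rightarrow> nat \<Rightarrow> nat" where
  "toJ k N L = (\<lambda>i\<in>{1..Suc k}. if i = 1 then N - length L else count_list L (i - 1))"

definition toL :: "nat \<Rightarrow> (nat \<Rightarrow> nat) \<Rightarrow> nat list" where
  "toL k j = rep_list (\<lambda>v. j (Suc v)) 1 (Suc k)"

definition Sset :: "nat \<Rightarrow> nat \<Rightarrow> nat list set" where
  "Sset k N = {L \<in> partitions_of k. length L \<le> N}"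

definition Tset :: "nat \<Rightarrow> nat \<Rightarrow> (nat \<Rightarrow> nat) set" where
  "Tset k N = {j \<in> {1..Suc k} \<rightarrow>\<^sub>E {0..N}.
       (\<Sum>i\<in>{1..Suc k}. j i) = N \<and> (\<Sum>i\<in>{1..Suc k}. i * j i) = k + N}"

lemma S_set: "L \<in> Sset k N \<Longrightarrow> set L \<subseteq> {1..k}"
  using member_le_sum_list[of _ L]
  by (fastforce simp: Sset_def partitions_of_def Suc_le_eq)

lemma toL_count: "count_list (toL k j) v = (if v \<in> {1..k} then j (Suc v) else 0)"
  by (auto simp: toL_def rep_list_count)

lemma toL_set: "set (toL k j) \<subseteq> {1..k}"
  using rep_list_set[of "\<lambda>v. j (Suc v)" 1 "Suc k"] by (auto simp: toL_def)

lemma toL_length: "length (toL k j) = (\<Sum>v\<in>{1..k}. j (Suc v))"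
proof -
  have "length (toL k j) = (\<Sum>v\<in>{1..k}. count_list (toL k j) v)"
    by (rule sum_count[symmetric, OF finite_atLeastAtMost toL_set])
  also have "\<dots> = (\<Sum>v\<in>{1..k}. j (Suc v))" by (rule sum.cong) (auto simp: toL_count)
  finally show ?thesis .
qed

lemma toL_sum: "sum_list (toL k j) = (\<Sum>v\<in>{1..k}. v * j (Suc v))"
proof -
  have "sum_list (toL k j) = (\<Sum>v\<in>{1..k}. v * count_list (toL k j) v)"
    by (rule sum_count_mult[symmetric, OF finite_atLeastAtMost toL_set])
  also have "\<dots> = (\<Sum>v\<in>{1..k}. v * j (Suc v))" by (rule sum.cong) (auto simp: toL_count)
  finally show ?thesis .
qed

lemma T_facts:
  assumes "j \<in> Tset k N"
  shows "j 1 + (\<Sum>v\<in>{1..k}. j (Suc v)) = N" "(\<Sum>v\<in>{1..k}. v * j (Suc v)) = k"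
proof -
  have s1: "(\<Sum>i\<in>{1..Suc k}. j i) = N" and s2: "(\<Sum>i\<in>{1..Suc k}. i * j i) = k + N"
    using assms by (auto simp: Tset_def)
  show e1: "j 1 + (\<Sum>v\<in>{1..k}. j (Suc v)) = N" using s1 by (simp only: split_sum1)
  have "j 1 + (\<Sum>v\<in>{1..k}. Suc v * j (Suc v)) = k + N" using s2 by (simp only: split_sum1)
  moreover have "(\<Sum>v\<in>{1..k}. Suc v * j (Suc v)) = (\<Sum>v\<in>{1..k}. v * j (Suc v)) + (\<Sum>v\<in>{1..k}. j (Suc v))"
    by (simp add: sum.distrib)
  ultimately show "(\<Sum>v\<in>{1..k}. v * j (Suc v)) = k" using e1 by linarith
qed

lemma toL_in_S: assumes j: "j \<in> Tset k N" shows "toL k j \<in> Sset k N"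
proof -
  have "sorted (toL k j)" by (simp add: toL_def rep_list_sorted)
  moreover have "\<forall>x\<in>set (toL k j). 0 < x" using toL_set[of k j] by auto
  moreover have "sum_list (toL k j) = k" using T_facts(2)[OF j] by (simp add: toL_sum)
  moreover have "length (toL k j) \<le> N" using T_facts(1)[OF j] by (simp add: toL_length)
  ultimately show ?thesis by (simp add: Sset_def partitions_of_def)
qed

lemma toJ_toL: "j \<in> Tset k N \<Longrightarrow> toJ k N (toL k j) = j"
proof
  fix i assume j: "j \<in> Tset k N"
  show "toJ k N (toL k j) i = j i"
  proof (cases "i \<in> {1..Suc k}")
    case True
    show ?thesis
    proof (cases "i = 1")
      case True
      then show ?thesis using T_facts(1)[OF j] by (auto simp: toJ_def toL_length)
    next
      case False
      then have "i - 1 \<in> {1..k}" "Suc (i - 1) = i" using \<open>i \<in> {1..Suc k}\<close> by auto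
      then show ?thesis using True False by (simp add: toJ_def toL_count)
    qed
  next
    case False
    then show ?thesis using j by (auto simp: toJ_def Tset_def PiE_def extensional_def)
  qed
qed

lemma toJ_in_T: assumes L: "L \<in> Sset k N" shows "toJ k N L \<in> Tset k N"
proof -
  have sl: "set L \<subseteq> {1..k}" using S_set[OF L] .
  have len: "length L \<le> N" using L by (simp add: Sset_def)
  have sumL: "sum_list L = k" using L by (simp add: Sset_def partitions_of_def)
  have c1: "(\<Sum>v\<in>{1..k}. count_list L v) = length L" using sum_count[OF _ sl] by simp
  have c2: "(\<Sum>v\<in>{1..k}. v * count_list L v) = k" using sum_count_mult[OF _ sl] sumL by simp
  have "toJ k N L \<in> {1..Suc k} \<rightarrow>\<^sub>E {0..N}"
    using count_le_length[of L] len by (auto simp: toJ_def intro: le_trans[OF count_le_length])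
  moreover have "(\<Sum>i\<in>{1..Suc k}. toJ k N L i) = N"
  proof -
    have "(\<Sum>i\<in>{1..Suc k}. toJ k N L i) = (N - length L) + (\<Sum>v\<in>{1..k}. count_list L v)"
      by (simp only: split_sum1) (simp add: toJ_def)
    then show ?thesis using c1 len by simp
  qed
  moreover have "(\<Sum>i\<in>{1..Suc k}. i * toJ k N L i) = k + N"
  proof -
    have "(\<Sum>i\<in>{1..Suc k}. i * toJ k N L i) = (N - length L) + (\<Sum>v\<in>{1..k}. Suc v * count_list L v)"
      by (simp only: split_sum1) (simp add: toJ_def)
    also have "(\<Sum>v\<in>{1..k}. Suc v * count_list L v) = k + length L"
      using c1 c2 by (simp add: sum.distrib)
    finally show ?thesis using len by simp
  qed
  ultimately show ?thesis by (simp add: Tset_def)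
qed

lemma toL_toJ: assumes L: "L \<in> Sset k N" shows "toL k (toJ k N L) = L"
proof (rule sorted_count_eq)
  show "sorted (toL k (toJ k N L))" by (simp add: toL_def rep_list_sorted)
  show "sorted L" using L by (simp add: Sset_def partitions_of_def)
  fix v
  have sl: "set L \<subseteq> {1..k}" using S_set[OF L] .
  show "count_list (toL k (toJ k N L)) v = count_list L v"
  proof (cases "v \<in> {1..k}")
    case True then show ?thesis by (simp add: toL_count toJ_def)
  next
    case False
    then have "v \<notin> set L" using sl by auto
    then show ?thesis using False by (auto simp: toL_count count_list_0_iff)
  qed
qed

lemma prod_list_nth: "prod_list (map a L) = (\<Prod>i<length L. (a (L ! i) :: 'a :: comm_monoid_mult))"
  by (induction L) (simp_all add: prod.lessThan_Suc_shift del: prod.lessThan_Suc)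

lemma C_stb_eq: assumes "set L \<subseteq> {1..k}"
  shows "C_stb L = (\<Prod>v\<in>{1..k}. fact (count_list L v))"
  unfolding C_stb_def
  by (rule prod.mono_neutral_left) (use assms in \<open>auto simp: count_list_0_iff\<close>)

lemma val_eq:
  fixes a :: "nat \<Rightarrow> complex"
  assumes L: "L \<in> Sset k N"
  defines "x \<equiv> (\<lambda>i. if i = 1 then 1 else a (i - 1))"
  shows "of_nat (fact N) / of_nat (\<Prod>i\<in>{1..Suc k}. fact (toJ k N L i)) * (\<Prod>i\<in>{1..Suc k}. x i ^ toJ k N L i)
       = 1 / of_nat (C_stb L) * (of_nat (\<Prod>i<length L. N - i) * prod_list (map a L))"
proof -
  have sl: "set L \<subseteq> {1..k}" using S_set[OF L] .
  have len: "length L \<le> N" using L by (simp add: Sset_def)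
  have tj: "toJ k N L (Suc v) = count_list L v" if "v \<in> {1..k}" for v
    using that by (simp add: toJ_def)
  have t1: "toJ k N L 1 = N - length L" by (simp add: toJ_def)
  have pf: "(\<Prod>i\<in>{1..Suc k}. fact (toJ k N L i)) = fact (N - length L) * (C_stb L :: nat)"
  proof -
    have "(\<Prod>i\<in>{1..Suc k}. fact (toJ k N L i)) = fact (toJ k N L 1) * (\<Prod>v\<in>{1..k}. (fact (toJ k N L (Suc v)) :: nat))"
      by (rule split_prod1)
    also have "(\<Prod>v\<in>{1..k}. (fact (toJ k N L (Suc v)) :: nat)) = (\<Prod>v\<in>{1..k}. fact (count_list L v))"
      by (rule prod.cong) (simp_all add: tj)
    finally show ?thesis using C_stb_eq[OF sl] t1 by simp
  qed
  have px: "(\<Prod>i\<in>{1..Suc k}. x i ^ toJ k N L i) = prod_list (map a L)"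
  proof -
    have "(\<Prod>i\<in>{1..Suc k}. x i ^ toJ k N L i) = x 1 ^ toJ k N L 1 * (\<Prod>v\<in>{1..k}. x (Suc v) ^ toJ k N L (Suc v))"
      by (rule split_prod1)
    also have "(\<Prod>v\<in>{1..k}. x (Suc v) ^ toJ k N L (Suc v)) = (\<Prod>v\<in>{1..k}. a v ^ count_list L v)"
      by (rule prod.cong) (auto simp: tj x_def)
    also have "\<dots> = prod_list (map a L)" by (rule prod_count[OF _ sl]) simp
    finally show ?thesis by (simp add: x_def)
  qed
  have ff: "(\<Prod>i<length L. N - i) * fact (N - length L) = (fact N :: nat)" by (rule ff_fact[OF len])
  have cpos: "C_stb L \<noteq> 0" by (simp add: C_stb_def)
  have fpos: "(fact (N - length L) :: nat) \<noteq> 0" by simp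
  define P where "P = prod_list (map a L)"
  define F where "F = (\<Prod>i<length L. N - i)"
  define G where "G = (fact (N - length L) :: nat)"
  have "of_nat (fact N) = (of_nat F * of_nat G :: complex)" unfolding F_def G_def
    by (simp flip: ff)
  then show ?thesis unfolding pf px
    using cpos fpos by (simp add: P_def[symmetric] F_def[symmetric] G_def[symmetric] field_simps)
qed

lemma inner_eq:
  fixes a :: "nat \<Rightarrow> complex"
  shows "(\<Sum>\<sigma>\<in>{\<sigma>. \<sigma> permutes {..<length L}}.
          of_int (sign \<sigma>) * A_sigma_L \<sigma> L (\<lambda>n j. if n \<le> N then a j else 0))
     = of_nat (\<Prod>i<length L. N - i) * prod_list (map a L)"
proof -
  have "(\<Sum>\<sigma>\<in>{\<sigma>. \<sigma> permutes {..<length L}}.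
          of_int (sign \<sigma>) * A_sigma_L \<sigma> L (\<lambda>n j. if n \<le> N then a j else 0))
     = (\<Sum>\<sigma>\<in>{\<sigma>. \<sigma> permutes {..<length L}}.
          of_int (sign \<sigma> * int N ^ card (cycles_of (length L) \<sigma>)) * prod_list (map a L))"
    by (rule sum.cong[OF refl]) (simp add: A_eq prod_list_nth)
  also have "\<dots> = of_int (\<Sum>\<sigma>\<in>{\<sigma>. \<sigma> permutes {..<length L}}. sign \<sigma> * int N ^ card (cycles_of (length L) \<sigma>)) * prod_list (map a L)"
    by (simp add: sum_distrib_right)
  also have "\<dots> = of_nat (\<Prod>i<length L. N - i) * prod_list (map a L)"
    by (simp only: perm_sum of_int_of_nat_eq)
  finally show ?thesis .
qed

theorem mainTheorem3:
  fixes k N :: nat and a :: "nat \<Rightarrow> complex"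
  shows "ord_bell (k + N) N (\<lambda>i. if i = 1 then 1 else a (i - 1)) =
    (\<Sum>L\<in>partitions_of k. (1 / of_nat (C_stb L)) *
       (\<Sum>\<sigma>\<in>{\<sigma>. \<sigma> permutes {..<length L}}.
          of_int (sign \<sigma>) * A_sigma_L \<sigma> L (\<lambda>n j. if n \<le> N then a j else 0)))"
proof -
  define x where "x = (\<lambda>i. if i = 1 then 1 else a (i - 1))"
  define g where "g L = 1 / of_nat (C_stb L) * (of_nat (\<Prod>i<length L. N - i) * prod_list (map a L))" for L
  define h where "h j = of_nat (fact N) / of_nat (\<Prod>i\<in>{1..Suc k}. fact (j i)) * (\<Prod>i\<in>{1..Suc k}. x i ^ j i)" for j
  have e: "k + N - N + 1 = Suc k" by simp
  have "ord_bell (k + N) N x = sum h (Tset k N)"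
    unfolding ord_bell_def e h_def Tset_def ..
  also have "\<dots> = sum g (Sset k N)"
  proof (rule sum.reindex_bij_witness[where i = "toL k" and j = "toJ k N", symmetric])
    show "\<And>L. L \<in> Sset k N \<Longrightarrow> toL k (toJ k N L) = L" by (rule toL_toJ)
    show "\<And>L. L \<in> Sset k N \<Longrightarrow> toJ k N L \<in> Tset k N" by (rule toJ_in_T)
    show "\<And>j. j \<in> Tset k N \<Longrightarrow> toJ k N (toL k j) = j" by (rule toJ_toL)
    show "\<And>j. j \<in> Tset k N \<Longrightarrow> toL k j \<in> Sset k N" by (rule toL_in_S)
    show "\<And>L. L \<in> Sset k N \<Longrightarrow> h (toJ k N L) = g L"
      unfolding h_def g_def x_def by (rule val_eq)
  qed
  also have "\<dots> = sum g (partitions_of k)"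
  proof (rule sum.mono_neutral_left)
    show "finite (partitions_of k)" by (rule finite_partitions)
    show "Sset k N \<subseteq> partitions_of k" by (auto simp: Sset_def)
    show "\<forall>L\<in>partitions_of k - Sset k N. g L = 0"
      by (auto simp: Sset_def g_def ff_zero)
  qed
  also have "\<dots> = (\<Sum>L\<in>partitions_of k. (1 / of_nat (C_stb L)) *
       (\<Sum>\<sigma>\<in>{\<sigma>. \<sigma> permutes {..<length L}}.
          of_int (sign \<sigma>) * A_sigma_L \<sigma> L (\<lambda>n j. if n \<le> N then a j else 0)))"
    by (rule sum.cong[OF refl]) (simp only: g_def inner_eq)
  finally show ?thesis unfolding x_def .
qed

end
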